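(* For every graph $G$, $\gamma_{oiR}(G)<\gamma_{oidR}(G)$.
   Context: Graphs are finite and simple (with at least one vertex). A DRD function of $G$ is $f:V(G)\to\{0,1,2,3\}$ such that every vertex with value $0$ has a neighbor with value $3$ or two neighbors with value $2$, and every vertex with value $1$ has a neighbor with value at least $2$; it is an OIDRD function if the set of vertices with value $0$ is independent, and $\gamma_{oidR}(G)$ is the minimum weight $\sum_v f(v)$ of an OIDRD function. A Roman dominating function is $f:V(G)\to\{0,1,2\}$ such that every vertex with value $0$ has a neighbor with value $2$; it is an OIRD function if the set of vertices with value $0$ is independent, and $\gamma_{oiR}(G)$ is the minimum weight of an OIRD function. *)

theory Defs
  imports Main
begin

definition graph :: "'a set \<Rightarrow> ('a \<Rightarrow> 'a \<Rightarrow> bool) \<Rightarrow> bool" where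
  "graph V E \<longleftrightarrow> finite V \<and> V \<noteq> {} \<and>
     (\<forall>u v. E u v \<longrightarrow> u \<in> V \<and> v \<in> V) \<and>
     (\<forall>u v. E u v \<longrightarrow> E v u) \<and> (\<forall>v. \<not> E v v)"

definition weight :: "'a set \<Rightarrow> ('a \<Rightarrow> nat) \<Rightarrow> nat" where
  "weight V f = (\<Sum>v\<in>V. f v)"

definition zeros_independent :: "'a set \<Rightarrow> ('a \<Rightarrow> 'a \<Rightarrow> bool) \<Rightarrow> ('a \<Rightarrow> nat) \<Rightarrow> bool" where
  "zeros_independent V E f \<longleftrightarrow>
     (\<forall>u\<in>V. \<forall>v\<in>V. f u = 0 \<and> f v = 0 \<longrightarrow> \<not> E u v)"

definition DRD :: "'a set \<Rightarrow> ('a \<Rightarrow> 'a \<Rightarrow> bool) \<Rightarrow> ('a \<Rightarrow> nat) \<Rightarrow> bool" where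
  "DRD V E f \<longleftrightarrow>
     (\<forall>v\<in>V. f v \<le> 3) \<and>
     (\<forall>v\<in>V. f v = 0 \<longrightarrow>
        (\<exists>u\<in>V. E v u \<and> f u = 3) \<or>
        (\<exists>u\<in>V. \<exists>w\<in>V. u \<noteq> w \<and> E v u \<and> E v w \<and> f u = 2 \<and> f w = 2)) \<and>
     (\<forall>v\<in>V. f v = 1 \<longrightarrow> (\<exists>u\<in>V. E v u \<and> f u \<ge> 2))"

definition OIDRD :: "'a set \<Rightarrow> ('a \<Rightarrow> 'a \<Rightarrow> bool) \<Rightarrow> ('a \<Rightarrow> nat) \<Rightarrow> bool" where
  "OIDRD V E f \<longleftrightarrow> DRD V E f \<and> zeros_independent V E f"

definition RD :: "'a set \<Rightarrow> ('a \<Rightarrow> 'a \<Rightarrow> bool) \<Rightarrow> ('a \<Rightarrow> nat) \<Rightarrow> bool" where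
  "RD V E f \<longleftrightarrow>
     (\<forall>v\<in>V. f v \<le> 2) \<and>
     (\<forall>v\<in>V. f v = 0 \<longrightarrow> (\<exists>u\<in>V. E v u \<and> f u = 2))"

definition OIRD :: "'a set \<Rightarrow> ('a \<Rightarrow> 'a \<Rightarrow> bool) \<Rightarrow> ('a \<Rightarrow> nat) \<Rightarrow> bool" where
  "OIRD V E f \<longleftrightarrow> RD V E f \<and> zeros_independent V E f"

definition gamma_oidR :: "'a set \<Rightarrow> ('a \<Rightarrow> 'a \<Rightarrow> bool) \<Rightarrow> nat" where
  "gamma_oidR V E = Min {weight V f | f. OIDRD V E f}"

definition gamma_oiR :: "'a set \<Rightarrow> ('a \<Rightarrow> 'a \<Rightarrow> bool) \<Rightarrow> nat" where
  "gamma_oiR V E = Min {weight V f | f. OIRD V E f}"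

end

theory Submission
  imports Defs
begin

lemma fin_w:
  assumes "finite V" and "\<And>f. P f \<Longrightarrow> \<forall>v\<in>V. f v \<le> 3"
  shows "finite {weight V f | f. P f}"
proof (rule finite_subset[of _ "{..3 * card V}"])
  show "{weight V f | f. P f} \<subseteq> {..3 * card V}"
  proof
    fix x assume "x \<in> {weight V f | f. P f}"
    then obtain f where x: "x = weight V f" and "P f" by blast
    then have "\<forall>v\<in>V. f v \<le> 3" using assms(2) by blast
    then have "(\<Sum>v\<in>V. f v) \<le> (\<Sum>v\<in>V. 3)" by (intro sum_mono) auto
    then show "x \<in> {..3 * card V}" using x by (simp add: weight_def mult.commute)
  qed
qed simp

theorem proposition2:
  fixes V :: "'a set" and E :: "'a \<Rightarrow> 'a \<Rightarrow> bool"
  assumes "graph V E"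
  shows "gamma_oiR V E < gamma_oidR V E"
proof -
  have finV: "finite V" and neV: "V \<noteq> {}" using assms by (auto simp: graph_def)
  have finD: "finite {weight V f | f. OIDRD V E f}"
    by (rule fin_w[OF finV]) (simp add: OIDRD_def DRD_def)
  have finR: "finite {weight V f | f. OIRD V E f}"
    by (rule fin_w[OF finV]) (auto simp add: OIRD_def RD_def)
  have "OIDRD V E (\<lambda>v. 3)" by (simp add: OIDRD_def DRD_def zeros_independent_def)
  then have "gamma_oidR V E \<in> {weight V f | f. OIDRD V E f}"
    unfolding gamma_oidR_def using finD by (intro Min_in) auto
  then obtain f where f: "OIDRD V E f" and gf: "gamma_oidR V E = weight V f" by blast
  have f3: "\<forall>v\<in>V. f v \<le> 3"
    and f0: "\<forall>v\<in>V. f v = 0 \<longrightarrow>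
        (\<exists>u\<in>V. E v u \<and> f u = 3) \<or>
        (\<exists>u\<in>V. \<exists>w\<in>V. u \<noteq> w \<and> E v u \<and> E v w \<and> f u = 2 \<and> f w = 2)"
    and f1: "\<forall>v\<in>V. f v = 1 \<longrightarrow> (\<exists>u\<in>V. E v u \<and> f u \<ge> 2)"
    and fz: "zeros_independent V E f"
    using f by (auto simp: OIDRD_def DRD_def)
  have "\<exists>g. OIRD V E g \<and> weight V g < weight V f"
  proof (cases "\<exists>u\<in>V. f u = 3")
    case True
    then obtain u where u: "u \<in> V" "f u = 3" by blast
    define g where "g = (\<lambda>v. min (f v) (2::nat))"
    have "OIRD V E g"
      unfolding OIRD_def RD_def
    proof (intro conjI ballI impI)
      fix v assume "v \<in> V" "g v = 0"
      then have "f v = 0" by (simp add: g_def)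
      then show "\<exists>u\<in>V. E v u \<and> g u = 2" using f0 \<open>v \<in> V\<close> by (force simp: g_def)
    next
      show "zeros_independent V E g" using fz
        by (auto simp add: zeros_independent_def g_def min_def split: if_splits)
    qed (simp add: g_def)
    moreover have "weight V g < weight V f"
      unfolding weight_def
      by (rule sum_strict_mono_ex1[OF finV]) (use u in \<open>force simp: g_def\<close>)+
    ultimately show ?thesis by blast
  next
    case False
    have "\<exists>u\<in>V. f u = 2"
    proof -
      obtain v where v: "v \<in> V" using neV by blast
      have "f v \<le> 3" using f3 v by blast
      then consider "f v = 0" | "f v = 1" | "f v = 2" | "f v = 3" by linarith
      then show ?thesis
      proof cases
        case 1 then show ?thesis using f0 v False by blast
      next
        case 2 then obtain u where "u \<in> V" "f u \<ge> 2" using f1 v by blast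
        then show ?thesis using f3 False by (metis le_antisym not_less_eq_eq numeral_2_eq_2 numeral_3_eq_3)
      qed (use v False in auto)
    qed
    then obtain u where u: "u \<in> V" "f u = 2" by blast
    define g where "g = f(u := 1)"
    have "OIRD V E g"
      unfolding OIRD_def RD_def
    proof (intro conjI ballI impI)
      fix v assume "v \<in> V"
      show "g v \<le> 2" using f3 False \<open>v \<in> V\<close> u
        by (cases "v = u") (auto simp: g_def, metis le_antisym not_less_eq_eq numeral_2_eq_2 numeral_3_eq_3)
    next
      fix v assume v: "v \<in> V" "g v = 0"
      then have "f v = 0" "v \<noteq> u" using u by (auto simp: g_def split: if_splits)
      then obtain a b where "a \<in> V" "b \<in> V" "a \<noteq> b" "E v a" "E v b" "f a = 2" "f b = 2"
        using f0 v False by blast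
      then show "\<exists>u'\<in>V. E v u' \<and> g u' = 2"
        by (cases "a = u") (auto simp: g_def)
    next
      show "zeros_independent V E g" using fz u
        by (auto simp: zeros_independent_def g_def)
    qed
    moreover have "weight V g < weight V f"
      unfolding weight_def
      by (rule sum_strict_mono_ex1[OF finV]) (use u in \<open>auto simp: g_def\<close>)
    ultimately show ?thesis by blast
  qed
  then obtain g where g: "OIRD V E g" "weight V g < weight V f" by blast
  have "gamma_oiR V E \<le> weight V g"
    unfolding gamma_oiR_def using finR g(1) by (intro Min_le) auto
  then show ?thesis using g(2) gf by linarith
qed

end
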